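(* Suppose Assumptions 1 and 2 hold. Let $\varpi^*=\mathrm{col}(\Lambda^*,\mathbf z^*,x^* )\in\mathbb R^{Nm}\times\mathbb R^{Mm}\times\mathbb R^n$ satisfy $\mathbf 0\in(\mathfrak A+\mathfrak B)(\varpi^* )$. Then there is $\lambda^*\in\mathbb R^m$ with $\Lambda^*=\mathbf 1_N\otimes\lambda^*$, the pair $(x^*,\lambda^* )$ satisfies the KKT system $$\mathbf 0\in\nabla_{x_i}f_i(x_i^*,x_{-i}^* )+A_i^T\lambda^*+N_{\Omega_i}(x_i^* )\ \ (\forall i\in\{1,\dots,N\}),\qquad \sum_{i=1}^N A_ix_i^*=\sum_{i=1}^N b_i,$$ and $x^*$ is a variational GNE of the game.
   Context: Game: players $i\in\{1,\dots,N\}$ choose $x_i\in\Omega_i\subseteq\mathbb R^{n_i}$; $n=\sum_i n_i$, $x=\mathrm{col}(x_1,\dots,x_N)$, $x_{-i}$ the stack of all $x_j$, $j\neq i$, $\Omega=\prod_i\Omega_i$. Player $i$ has cost $f_i(x_i,x_{-i})$ and private data $A_i\in\mathbb R^{m\times n_i}$, $b_i\in\mathbb R^m$. Shared set $X=\Omega\cap\{x:\sum_iA_ix_i=\sum_ib_i\}$. Pseudo-gradient $F(x)=\mathrm{col}(\nabla_{x_1}f_1(x),\dots,\nabla_{x_N}f_N(x))$. A variational GNE is an $x^*\in X$ with $\langle F(x^* ),x-x^*\rangle\ge0$ for all $x\in X$. Assumption 1: each $\Omega_i$ is closed convex with nonempty interior; $X$ has nonempty relative interior; for every $x_{-i}\in\prod_{j\ne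 i}\Omega_j$ the set $\{x_i\in\Omega_i:(x_i,x_{-i})\in X\}$ has nonempty relative interior; each $f_i$ is continuously differentiable and convex in $x_i$ for fixed $x_{-i}$. Assumption 2: $F$ is $\upsilon$-strongly monotone on $\Omega$ ($\langle F(x)-F(y),x-y\rangle\ge\upsilon\|x-y\|^2$) and $\chi$-Lipschitz on $\Omega$. Graph: $\mathcal G$ is a connected undirected graph on the $N$ players with $M$ edges $e_1,\dots,e_M$, each given an arbitrary orientation. Incidence matrix $V\in\mathbb R^{N\times M}$: $V_{il}=1$ if $e_l$ points to $i$, $V_{il}=-1$ if $e_l$ starts at $i$, $0$ otherwise. $\mathbf V=V\otimes I_m$, $\mathbf A=\mathrm{diag}(A_1,\dots,A_N)\in\mathbb R^{Nm\times n}$, $\mathbf b=\mathrm{col}(b_1,\dots,b_N)$. Operators on $\varpi=\mathrm{col}(\Lambda,\mathbf z,x)$, $\Lambda=\mathrm{col}(\lambda_1,\dots,\lambda_N)\in\mathbb R^{Nm}$, $\mathbf z\in\mathbb R^{Mm}$, $x\in\mathbb R^n$: $\mathfrak A(\varpi)=\mathrm{col}\big(-\mathbf Ax-\mathbf V\mathbf z,\ \mathbf V^T\Lambda,\ \mathbf A^T\Lambda+N_\Omega(x)\big)$ (set-valued, $N_\Omega$ the normal cone of $\Omega$), $\mathfrak B(\varpi)=\mathrm{col}(\mathbf b,\mathbf 0,F(x))$. *)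

theory Defs
  imports "HOL-Analysis.Analysis"
begin

text \<open>Players form a finite type 'p (N = CARD('p)); the stacked decision
vector x lives in real^'n (n = CARD('n)); each coordinate k belongs to player blk k,
so x_i is the block of coordinates of player i, identified with the subspace
block_space blk i of real^'n.
Edges: a set E of ordered pairs (s,t), the orientation of the edge is from s to t.\<close>

definition block_space :: "('n::finite \<Rightarrow> 'p) \<Rightarrow> 'p \<Rightarrow> (real^'n) set" where
  "block_space blk i = {y. \<forall>k. blk k \<noteq> i \<longrightarrow> y $ k = 0}"

definition blk_proj :: "('n::finite \<Rightarrow> 'p) \<Rightarrow> 'p \<Rightarrow> real^'n \<Rightarrow> real^'n" where
  "blk_proj blk i x = (\<chi> k. if blk k = i then x $ k else 0)"

definition normal_cone :: "'a::real_inner set \<Rightarrow> 'a \<Rightarrow> 'a set" where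
  "normal_cone S x = (if x \<in> S then {v. \<forall>y\<in>S. inner v (y - x) \<le> 0} else {})"

definition Omega_set :: "('n::finite \<Rightarrow> 'p) \<Rightarrow> ('p \<Rightarrow> (real^'n) set) \<Rightarrow> (real^'n) set" where
  "Omega_set blk \<Omega> = {x. \<forall>i. blk_proj blk i x \<in> \<Omega> i}"

definition X_set :: "('n::finite \<Rightarrow> 'p::finite) \<Rightarrow> ('p \<Rightarrow> (real^'n) set)
     \<Rightarrow> ('p \<Rightarrow> real^'n^'m) \<Rightarrow> ('p \<Rightarrow> real^'m::finite) \<Rightarrow> (real^'n) set" where
  "X_set blk \<Omega> A b = Omega_set blk \<Omega> \<inter> {x. (\<Sum>i\<in>UNIV. A i *v x) = (\<Sum>i\<in>UNIV. b i)}"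

definition pseudo_gradient :: "('n::finite \<Rightarrow> 'p) \<Rightarrow> ('p \<Rightarrow> real^'n \<Rightarrow> real) \<Rightarrow> real^'n \<Rightarrow> real^'n" where
  "pseudo_gradient blk f x = (\<chi> k. frechet_derivative (f (blk k)) (at x) (axis k 1))"

definition incid_mult :: "('p \<times> 'p) set \<Rightarrow> ('p \<times> 'p \<Rightarrow> real^'m) \<Rightarrow> 'p \<Rightarrow> real^'m" where
  "incid_mult E z i = (\<Sum>e\<in>{e\<in>E. snd e = i}. z e) - (\<Sum>e\<in>{e\<in>E. fst e = i}. z e)"

definition incid_transp :: "('p \<Rightarrow> real^'m) \<Rightarrow> 'p \<times> 'p \<Rightarrow> real^'m" where
  "incid_transp \<Lambda> e = \<Lambda> (snd e) - \<Lambda> (fst e)"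

definition opA :: "('n::finite \<Rightarrow> 'p::finite) \<Rightarrow> ('p \<Rightarrow> (real^'n) set) \<Rightarrow> ('p \<Rightarrow> real^'n^'m::finite)
   \<Rightarrow> ('p \<times> 'p) set \<Rightarrow> ('p \<Rightarrow> real^'m) \<times> ('p \<times> 'p \<Rightarrow> real^'m) \<times> (real^'n)
   \<Rightarrow> (('p \<Rightarrow> real^'m) \<times> ('p \<times> 'p \<Rightarrow> real^'m) \<times> (real^'n)) set" where
  "opA blk \<Omega> A E w = (case w of (\<Lambda>, z, x) \<Rightarrow>
     {((\<lambda>i. - (A i *v x) - incid_mult E z i),
       incid_transp \<Lambda>,
       (\<Sum>i\<in>UNIV. transpose (A i) *v \<Lambda> i) + v) | v. v \<in> normal_cone (Omega_set blk \<Omega>) x})"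

definition opB :: "('p \<Rightarrow> real^'m) \<Rightarrow> (real^'n \<Rightarrow> real^'n)
   \<Rightarrow> ('p \<Rightarrow> real^'m) \<times> ('p \<times> 'p \<Rightarrow> real^'m) \<times> (real^'n)
   \<Rightarrow> ('p \<Rightarrow> real^'m) \<times> ('p \<times> 'p \<Rightarrow> real^'m) \<times> (real^'n)" where
  "opB b F w = (case w of (\<Lambda>, z, x) \<Rightarrow> (b, (\<lambda>e. 0), F x))"

text \<open>0 \<in> (frak A + frak B)(w); the edge component is an element of R^{Mm}, i.e. only
its values on the edges in E are coordinates.\<close>
definition zero_in_A_plus_B where
  "zero_in_A_plus_B blk \<Omega> A b E F w \<longleftrightarrow>
     (\<exists>(a1, a2, a3) \<in> opA blk \<Omega> A E w.
        (case opB b F w of (b1, b2, b3) \<Rightarrow>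
          (\<forall>i. a1 i + b1 i = 0) \<and> (\<forall>e\<in>E. a2 e + b2 e = 0) \<and> a3 + b3 = 0))"

definition is_vGNE :: "(real^'n \<Rightarrow> real^'n) \<Rightarrow> (real^'n) set \<Rightarrow> real^'n \<Rightarrow> bool" where
  "is_vGNE F X x \<longleftrightarrow> x \<in> X \<and> (\<forall>y\<in>X. inner (F x) (y - x) \<ge> 0)"

definition oriented_connected_graph :: "('p \<times> 'p) set \<Rightarrow> bool" where
  "oriented_connected_graph E \<longleftrightarrow>
     (\<forall>(s,t)\<in>E. s \<noteq> t \<and> (t,s) \<notin> E) \<and> (\<forall>i j. (i, j) \<in> (E \<union> E\<inverse>)\<^sup>*)"

end

theory Submission
  imports Defs
begin


lemma tA_comp:
  assumes "\<And>r k. blk k \<noteq> i \<Longrightarrow> (A::real^'n^'m) $ r $ k = 0" "blk k \<noteq> i"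
  shows "(transpose A *v (l::real^'m)) $ k = 0"
  using assms by (simp add: matrix_vector_mult_def transpose_def)

lemma inner_tA: "inner (transpose (A::real^'n^'m) *v l) w = inner l (A *v w)"
  by (metis dot_lmul_matrix transpose_transpose vector_transpose_matrix)

lemma inner_block:
  assumes "w \<in> block_space blk i"
  shows "inner v w = inner (blk_proj blk i v) w"
proof -
  have "\<And>k. v $ k * w $ k = (blk_proj blk i v) $ k * w $ k"
    using assms by (auto simp: blk_proj_def block_space_def)
  then show ?thesis unfolding inner_vec_def inner_real_def by (intro sum.cong) auto
qed

lemma incid_sum:
  fixes E :: "('p::finite \<times> 'p) set"
  shows "(\<Sum>i\<in>UNIV. incid_mult E z i) = 0"
proof -
  have f: "finite E" by simp
  have a: "(\<Sum>i\<in>UNIV. \<Sum>e\<in>{e\<in>E. snd e = i}. z e) = sum z E"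
    by (rule sum.group[OF f]) auto
  have b: "(\<Sum>i\<in>UNIV. \<Sum>e\<in>{e\<in>E. fst e = i}. z e) = sum z E"
    by (rule sum.group[OF f]) auto
  show ?thesis unfolding incid_mult_def sum_subtractf a b by simp
qed

theorem theorem1:
  fixes blk :: "'n::finite \<Rightarrow> 'p::finite"
    and \<Omega> :: "'p \<Rightarrow> (real^'n) set"
    and f :: "'p \<Rightarrow> real^'n \<Rightarrow> real"
    and A :: "'p \<Rightarrow> real^'n^'m::finite"
    and b :: "'p \<Rightarrow> real^'m"
    and E :: "('p \<times> 'p) set"
    and \<upsilon> L :: real
    and \<Lambda>s :: "'p \<Rightarrow> real^'m"
    and zs :: "'p \<times> 'p \<Rightarrow> real^'m"
    and xs :: "real^'n"
  assumes A_block: "\<And>i r k. blk k \<noteq> i \<Longrightarrow> A i $ r $ k = 0"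
    and Omega_sub: "\<And>i. \<Omega> i \<subseteq> block_space blk i"
    and Omega_closed: "\<And>i. closed (\<Omega> i)"
    and Omega_convex: "\<And>i. convex (\<Omega> i)"
    and Omega_int: "\<And>i. \<exists>y\<in>\<Omega> i. \<exists>e>0. \<forall>w\<in>block_space blk i. dist w y < e \<longrightarrow> w \<in> \<Omega> i"
    and X_relint: "rel_interior (X_set blk \<Omega> A b) \<noteq> {}"
    and X_slice_relint: "\<And>i x. (\<forall>j. j \<noteq> i \<longrightarrow> blk_proj blk j x \<in> \<Omega> j) \<Longrightarrow>
          rel_interior {y \<in> \<Omega> i. y + (x - blk_proj blk i x) \<in> X_set blk \<Omega> A b} \<noteq> {}"
    and f_diff: "\<And>i x. f i differentiable (at x)"
    and f_C1: "\<And>i k. continuous_on UNIV (\<lambda>x. frechet_derivative (f i) (at x) (axis k 1))"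
    and f_convex: "\<And>i x. convex_on (\<Omega> i) (\<lambda>y. f i (y + (x - blk_proj blk i x)))"
    and strong_mono: "\<upsilon> > 0"
      "\<And>x y. x \<in> Omega_set blk \<Omega> \<Longrightarrow> y \<in> Omega_set blk \<Omega> \<Longrightarrow>
         inner (pseudo_gradient blk f x - pseudo_gradient blk f y) (x - y) \<ge> \<upsilon> * (norm (x - y))\<^sup>2"
    and lipschitz: "L \<ge> 0"
      "\<And>x y. x \<in> Omega_set blk \<Omega> \<Longrightarrow> y \<in> Omega_set blk \<Omega> \<Longrightarrow>
         dist (pseudo_gradient blk f x) (pseudo_gradient blk f y) \<le> L * dist x y"
    and graph: "oriented_connected_graph E"
    and zero: "zero_in_A_plus_B blk \<Omega> A b E (pseudo_gradient blk f) (\<Lambda>s, zs, xs)"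
  shows "\<exists>lam :: real^'m.
           (\<forall>i. \<Lambda>s i = lam)
         \<and> (\<forall>i. 0 \<in> {blk_proj blk i (pseudo_gradient blk f xs) + transpose (A i) *v lam + v | v.
                     v \<in> block_space blk i \<inter> normal_cone (\<Omega> i) (blk_proj blk i xs)})
         \<and> (\<Sum>i\<in>UNIV. A i *v xs) = (\<Sum>i\<in>UNIV. b i)
         \<and> is_vGNE (pseudo_gradient blk f) (X_set blk \<Omega> A b) xs"
proof -
  let ?F = "pseudo_gradient blk f"
  from zero obtain v where vN: "v \<in> normal_cone (Omega_set blk \<Omega>) xs"
    and h1': "\<forall>i. - (A i *v xs) - incid_mult E zs i + b i = 0"
    and h2': "\<forall>e\<in>E. incid_transp \<Lambda>s e + 0 = 0"
    and h3: "(\<Sum>i\<in>UNIV. transpose (A i) *v \<Lambda>s i) + v + ?F xs = 0"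
    unfolding zero_in_A_plus_B_def opA_def opB_def
    by (auto simp del: transpose_matrix_vector)
  have h1: "\<And>i. - (A i *v xs) - incid_mult E zs i + b i = 0" using h1' by blast
  have h2: "\<And>e. e \<in> E \<Longrightarrow> \<Lambda>s (snd e) - \<Lambda>s (fst e) = 0"
    using h2' by (simp add: incid_transp_def)
  have xsO: "xs \<in> Omega_set blk \<Omega>" using vN by (auto simp: normal_cone_def split: if_splits)
  have vN': "\<And>y. y \<in> Omega_set blk \<Omega> \<Longrightarrow> inner v (y - xs) \<le> 0"
    using vN xsO by (auto simp: normal_cone_def)
  have conn: "(i, j) \<in> (E \<union> E\<inverse>)\<^sup>* \<Longrightarrow> \<Lambda>s i = \<Lambda>s j" for i j
  proof (induction rule: rtrancl_induct)
    case base then show ?case by simp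
  next
    case (step y z)
    then show ?case using h2[of "(y,z)"] h2[of "(z,y)"] by auto
  qed
  define lam where "lam = \<Lambda>s undefined"
  have const: "\<forall>i. \<Lambda>s i = lam"
    using conn graph unfolding oriented_connected_graph_def lam_def by metis
  have sumeq: "(\<Sum>i\<in>UNIV. A i *v xs) = (\<Sum>i\<in>UNIV. b i)"
  proof -
    have "(\<Sum>i\<in>UNIV. b i) = (\<Sum>i\<in>UNIV. A i *v xs + incid_mult E zs i)"
      using h1 by (intro sum.cong) (auto simp: algebra_simps eq_neg_iff_add_eq_0)
    also have "\<dots> = (\<Sum>i\<in>UNIV. A i *v xs)" by (simp add: sum.distrib incid_sum)
    finally show ?thesis by simp
  qed
  have h3': "(\<Sum>j\<in>UNIV. transpose (A j) *v lam) + v + ?F xs = 0" using h3 const by simp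
  have kkt: "0 \<in> {blk_proj blk i (?F xs) + transpose (A i) *v lam + w | w.
                     w \<in> block_space blk i \<inter> normal_cone (\<Omega> i) (blk_proj blk i xs)}" for i
  proof -
    have e1: "blk_proj blk i (\<Sum>j\<in>UNIV. transpose (A j) *v lam) = transpose (A i) *v lam"
    proof (subst vec_eq_iff, intro allI)
      fix k
      show "blk_proj blk i (\<Sum>j\<in>UNIV. transpose (A j) *v lam) $ k = (transpose (A i) *v lam) $ k"
      proof (cases "blk k = i")
        case True
        have zz: "j \<noteq> i \<Longrightarrow> (transpose (A j) *v lam) $ k = 0" for j
          using tA_comp[of blk j "A j" k lam] A_block True by metis
        have "(\<Sum>j\<in>UNIV. (transpose (A j) *v lam) $ k) = (\<Sum>j\<in>{i}. (transpose (A j) *v lam) $ k)"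
          by (rule sum.mono_neutral_right) (use zz in auto)
        then have "(\<Sum>j\<in>UNIV. (transpose (A j) *v lam) $ k) = (transpose (A i) *v lam) $ k"
          by simp
        then show ?thesis using True by (simp add: blk_proj_def sum_component)
      next
        case False
        then have "(transpose (A i) *v lam) $ k = 0"
          using tA_comp[of blk i "A i" k lam] A_block by metis
        then show ?thesis using False by (simp add: blk_proj_def del: transpose_matrix_vector)
      qed
    qed
    have zero_i: "blk_proj blk i (?F xs) + transpose (A i) *v lam + blk_proj blk i v = 0"
    proof -
      have "blk_proj blk i ((\<Sum>j\<in>UNIV. transpose (A j) *v lam) + v + ?F xs) = 0"
        using h3' by (simp add: blk_proj_def vec_eq_iff)
      moreover have "blk_proj blk i ((\<Sum>j\<in>UNIV. transpose (A j) *v lam) + v + ?F xs)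
         = blk_proj blk i (\<Sum>j\<in>UNIV. transpose (A j) *v lam) + blk_proj blk i v + blk_proj blk i (?F xs)"
        by (simp add: blk_proj_def vec_eq_iff)
      ultimately show ?thesis using e1 by (simp add: algebra_simps)
    qed
    have bs: "blk_proj blk i v \<in> block_space blk i" by (simp add: blk_proj_def block_space_def)
    have xi: "blk_proj blk i xs \<in> \<Omega> i" using xsO by (simp add: Omega_set_def)
    have nc: "blk_proj blk i v \<in> normal_cone (\<Omega> i) (blk_proj blk i xs)"
    proof -
      have "inner (blk_proj blk i v) (y - blk_proj blk i xs) \<le> 0" if y: "y \<in> \<Omega> i" for y
      proof -
        have yb: "y \<in> block_space blk i" using y Omega_sub by blast
        define x' where "x' = xs - blk_proj blk i xs + y"
        have "blk_proj blk j x' = (if j = i then y else blk_proj blk j xs)" for j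
          using yb by (auto simp: x'_def blk_proj_def block_space_def vec_eq_iff)
        then have "x' \<in> Omega_set blk \<Omega>" using xsO y by (auto simp: Omega_set_def)
        then have "inner v (x' - xs) \<le> 0" by (rule vN')
        moreover have dd: "x' - xs = y - blk_proj blk i xs" by (simp add: x'_def)
        moreover have "y - blk_proj blk i xs \<in> block_space blk i"
          using yb by (simp add: blk_proj_def block_space_def)
        ultimately show ?thesis using inner_block by metis
      qed
      then show ?thesis using xi by (simp add: normal_cone_def)
    qed
    show ?thesis by (rule CollectI, rule exI[of _ "blk_proj blk i v"]) (use zero_i bs nc in auto)
  qed
  have xsX: "xs \<in> X_set blk \<Omega> A b" using xsO sumeq by (simp add: X_set_def)
  have vgne: "is_vGNE ?F (X_set blk \<Omega> A b) xs"
    unfolding is_vGNE_def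
  proof (intro conjI ballI xsX)
    fix y assume y: "y \<in> X_set blk \<Omega> A b"
    have yO: "y \<in> Omega_set blk \<Omega>" and ys: "(\<Sum>i\<in>UNIV. A i *v y) = (\<Sum>i\<in>UNIV. b i)"
      using y by (auto simp: X_set_def)
    have "inner (\<Sum>j\<in>UNIV. transpose (A j) *v lam) (y - xs) = (\<Sum>j\<in>UNIV. inner lam (A j *v (y - xs)))"
      unfolding inner_sum_left inner_tA ..
    also have "\<dots> = inner lam (\<Sum>j\<in>UNIV. A j *v y - A j *v xs)"
      by (simp add: inner_sum_right matrix_vector_mult_diff_distrib)
    also have "\<dots> = 0" using ys sumeq by (simp add: sum_subtractf)
    finally have z: "inner (\<Sum>j\<in>UNIV. transpose (A j) *v lam) (y - xs) = 0" .
    have Fe: "?F xs = - (\<Sum>j\<in>UNIV. transpose (A j) *v lam) - v"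
      using h3' by (simp add: algebra_simps eq_neg_iff_add_eq_0)
    have "inner (?F xs) (y - xs) = - inner v (y - xs)"
      unfolding Fe using z by (simp add: inner_diff_left)
    then show "inner (?F xs) (y - xs) \<ge> 0" using vN'[OF yO] by simp
  qed
  show ?thesis using const kkt sumeq vgne by blast
qed

end
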